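(* The assignment $\Gamma:\mathbf{FinArb}^<_\star\to\mathbf{TArb}$ (defined below) is a well-defined functor; in particular, for every morphism $h:T\to T'$ of $\mathbf{FinArb}^<_\star$, $\Gamma(h)$ is a homomorphism of pointed edge-ordered graphs $\Gamma(T)\to\Gamma(T')$ that preserves longest paths.
   Context: A (directed) graph is $(V,\to)$ with $\to\subseteq V\times V$; $N(u)$ is the set of outgoing edges of $u$. A pointed graph has a distinguished vertex $v_0$; connected means every vertex is reachable by a path from $v_0$. A path is a finite sequence $v_1\to\cdots\to v_n$ of vertices joined by edges, with length $|\pi|$; co-initial paths share their source; $\pi\sqsubset\sigma$ means $\pi$ is a proper prefix of $\sigma$. A finite edge-ordered graph is a finite graph with a strict linear order $\triangleleft$ on each neighborhood. Lexicographic path order: if $\pi\sqsubset\sigma$ then $\pi\prec\sigma$ (symmetrically); otherwise, with $\zeta$ the longest common prefix, $u$ its target and $v_1,v_2$ the next vertices, $\pi\prec\sigma$ iff $u\to v_1\triangleleft u\to v_2$. Shortlex: $\pi\prec^s\sigma$ iff $|\pi|<|\sigma|$ or ($|\pi|=|\sigma|$ and $\pi\prec\sigma$). A homomorphism of finite pointed edge-ordered graphs $h:G\to H$ is a vertex map with (i) $u\to v$ implies $h(u)\to h(v)$; (ii) the distinguished vertex of $G$ is the unique vertex mapped to the distinguished vertex of $H$; (iii) $u\to v_1\triangleleft u\to v_2$ implies $h(u)\to h(v_1)\triangleleft h(u)\to h(v_2)$. An arborescence is a pointed graph with a unique path $v_0\rightsquigarrow u$ for every $u$. $\mathbf{FinArb}^<_\star$: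 finite edge-ordered arborescences with homomorphisms of pointed edge-ordered graphs. $\mathbf{TArb}$: objects are finite, pointed, connected, edge-ordered graphs $G$ for which there is a finite, connected, pointed, edge-ordered arborescence $T$ on the same vertices with the same distinguished point such that the edge relation of $G$ is the transitive closure of that of $T$ and $u\to v_1\triangleleft u\to v_2$ in $G$ iff $(v_0\rightsquigarrow v_1)\prec^s(v_0\rightsquigarrow v_2)$ for the unique paths in $T$; in such $G$ longest paths $u\rightsquigarrow v$ are unique. Morphisms of $\mathbf{TArb}$ are homomorphisms satisfying (i)–(iii) that map the longest path $u\rightsquigarrow v$ to the longest path $h(u)\rightsquigarrow h(v)$. $\Gamma(T)$ has the vertices and distinguished point of $T$, edge relation the transitive closure of that of $T$, and $u\to v_1\triangleleft u\to v_2$ iff $(v_0\rightsquigarrow v_1)\prec^s(v_0\rightsquigarrow v_2)$ in $T$; $\Gamma(h)(v)=h(v)$. *)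

theory Defs
  imports Main "HOL-Library.Sublist"
begin

text \<open>A pointed edge-ordered graph: vertices, edge relation, distinguished vertex,
  and for each vertex u a relation eord u v1 v2 meaning (u -> v1) before (u -> v2).\<close>
record 'a eograph =
  verts :: "'a set"
  arcs  :: "('a \<times> 'a) set"
  root  :: 'a
  eord  :: "'a \<Rightarrow> 'a \<Rightarrow> 'a \<Rightarrow> bool"

definition nbhd :: "('a, 'b) eograph_scheme \<Rightarrow> 'a \<Rightarrow> 'a set" where
  "nbhd G u = {v. (u, v) \<in> arcs G}"

definition is_path :: "('a, 'b) eograph_scheme \<Rightarrow> 'a list \<Rightarrow> bool" where
  "is_path G p \<longleftrightarrow> p \<noteq> [] \<and> set p \<subseteq> verts G \<and>
     (\<forall>i. Suc i < length p \<longrightarrow> (p ! i, p ! Suc i) \<in> arcs G)"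

definition path_from_to :: "('a, 'b) eograph_scheme \<Rightarrow> 'a list \<Rightarrow> 'a \<Rightarrow> 'a \<Rightarrow> bool" where
  "path_from_to G p u v \<longleftrightarrow> is_path G p \<and> hd p = u \<and> last p = v"

definition path_len :: "'a list \<Rightarrow> nat" where
  "path_len p = length p - 1"

definition fin_eo_graph :: "('a, 'b) eograph_scheme \<Rightarrow> bool" where
  "fin_eo_graph G \<longleftrightarrow> finite (verts G) \<and> root G \<in> verts G \<and> arcs G \<subseteq> verts G \<times> verts G \<and>
     (\<forall>u v1 v2. eord G u v1 v2 \<longrightarrow> (u, v1) \<in> arcs G \<and> (u, v2) \<in> arcs G) \<and>
     (\<forall>u\<in>verts G.
        (\<forall>v\<in>nbhd G u. \<not> eord G u v v) \<and>
        (\<forall>v1\<in>nbhd G u. \<forall>v2\<in>nbhd G u. \<forall>v3\<in>nbhd G u.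
            eord G u v1 v2 \<longrightarrow> eord G u v2 v3 \<longrightarrow> eord G u v1 v3) \<and>
        (\<forall>v1\<in>nbhd G u. \<forall>v2\<in>nbhd G u. v1 \<noteq> v2 \<longrightarrow> eord G u v1 v2 \<or> eord G u v2 v1))"

definition connected_pg :: "('a, 'b) eograph_scheme \<Rightarrow> bool" where
  "connected_pg G \<longleftrightarrow> (\<forall>u\<in>verts G. \<exists>p. path_from_to G p (root G) u)"

definition arborescence :: "('a, 'b) eograph_scheme \<Rightarrow> bool" where
  "arborescence G \<longleftrightarrow> (\<forall>u\<in>verts G. \<exists>!p. path_from_to G p (root G) u)"

definition fin_arb :: "('a, 'b) eograph_scheme \<Rightarrow> bool" where
  "fin_arb T \<longleftrightarrow> fin_eo_graph T \<and> arborescence T"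

definition lex_less :: "('a, 'b) eograph_scheme \<Rightarrow> 'a list \<Rightarrow> 'a list \<Rightarrow> bool" where
  "lex_less G p q \<longleftrightarrow> strict_prefix p q \<or>
     (\<exists>z v1 v2 r1 r2. z \<noteq> [] \<and> p = z @ v1 # r1 \<and> q = z @ v2 # r2 \<and> eord G (last z) v1 v2)"

definition shortlex_less :: "('a, 'b) eograph_scheme \<Rightarrow> 'a list \<Rightarrow> 'a list \<Rightarrow> bool" where
  "shortlex_less G p q \<longleftrightarrow> path_len p < path_len q \<or>
     (path_len p = path_len q \<and> lex_less G p q)"

definition tpath :: "('a, 'b) eograph_scheme \<Rightarrow> 'a \<Rightarrow> 'a list" where
  "tpath T v = (THE p. path_from_to T p (root T) v)"

definition eo_hom :: "('a, 'c) eograph_scheme \<Rightarrow> ('b, 'd) eograph_scheme \<Rightarrow> ('a \<Rightarrow> 'b) \<Rightarrow> bool" where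
  "eo_hom G H h \<longleftrightarrow> h ` verts G \<subseteq> verts H \<and>
     (\<forall>u v. (u, v) \<in> arcs G \<longrightarrow> (h u, h v) \<in> arcs H) \<and>
     (\<forall>v\<in>verts G. h v = root H \<longleftrightarrow> v = root G) \<and>
     (\<forall>u v1 v2. (u, v1) \<in> arcs G \<longrightarrow> (u, v2) \<in> arcs G \<longrightarrow> eord G u v1 v2 \<longrightarrow>
        eord H (h u) (h v1) (h v2))"

definition finarb_mor :: "('a, 'c) eograph_scheme \<Rightarrow> ('b, 'd) eograph_scheme \<Rightarrow> ('a \<Rightarrow> 'b) \<Rightarrow> bool" where
  "finarb_mor T T' h \<longleftrightarrow> fin_arb T \<and> fin_arb T' \<and> eo_hom T T' h"

definition longest_path :: "('a, 'b) eograph_scheme \<Rightarrow> 'a list \<Rightarrow> 'a \<Rightarrow> 'a \<Rightarrow> bool" where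
  "longest_path G p u v \<longleftrightarrow> path_from_to G p u v \<and>
     (\<forall>q. path_from_to G q u v \<longrightarrow> path_len q \<le> path_len p)"

definition tarb_obj :: "'a eograph \<Rightarrow> bool" where
  "tarb_obj G \<longleftrightarrow> fin_eo_graph G \<and> connected_pg G \<and>
     (\<exists>T :: 'a eograph. fin_eo_graph T \<and> connected_pg T \<and> arborescence T \<and>
        verts T = verts G \<and> root T = root G \<and> arcs G = (arcs T)\<^sup>+ \<and>
        (\<forall>u v1 v2. (u, v1) \<in> arcs G \<longrightarrow> (u, v2) \<in> arcs G \<longrightarrow>
           (eord G u v1 v2 \<longleftrightarrow> shortlex_less T (tpath T v1) (tpath T v2))))"

definition tarb_mor :: "'a eograph \<Rightarrow> 'b eograph \<Rightarrow> ('a \<Rightarrow> 'b) \<Rightarrow> bool" where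
  "tarb_mor G H h \<longleftrightarrow> tarb_obj G \<and> tarb_obj H \<and> eo_hom G H h \<and>
     (\<forall>p u v. longest_path G p u v \<longrightarrow> longest_path H (map h p) (h u) (h v))"

definition Gamma :: "'a eograph \<Rightarrow> 'a eograph" where
  "Gamma T = \<lparr> verts = verts T, arcs = (arcs T)\<^sup>+, root = root T,
     eord = (\<lambda>u v1 v2. (u, v1) \<in> (arcs T)\<^sup>+ \<and> (u, v2) \<in> (arcs T)\<^sup>+ \<and>
                        shortlex_less T (tpath T v1) (tpath T v2)) \<rparr>"

definition Gamma_mor :: "('a \<Rightarrow> 'b) \<Rightarrow> ('a \<Rightarrow> 'b)" where
  "Gamma_mor h = (\<lambda>v. h v)"

end

theory Submission
  imports Defs
begin

lemma path_single: "u \<in> verts G \<Longrightarrow> path_from_to G [u] u u"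
  by (simp add: path_from_to_def is_path_def)

lemma path_snoc:
  assumes "path_from_to G p u a" "(a, b) \<in> arcs G" "b \<in> verts G"
  shows "path_from_to G (p @ [b]) u b"
proof -
  have ne: "p \<noteq> []" and sv: "set p \<subseteq> verts G" and hd: "hd p = u" and la: "last p = a"
    and ar: "\<And>i. Suc i < length p \<Longrightarrow> (p ! i, p ! Suc i) \<in> arcs G"
    using assms(1) by (auto simp: path_from_to_def is_path_def)
  have "(\<forall>i. Suc i < length (p @ [b]) \<longrightarrow> ((p @ [b]) ! i, (p @ [b]) ! Suc i) \<in> arcs G)"
  proof (intro allI impI)
    fix i assume i: "Suc i < length (p @ [b])"
    show "((p @ [b]) ! i, (p @ [b]) ! Suc i) \<in> arcs G"
    proof (cases "Suc i < length p")
      case True then show ?thesis using ar[OF True] by (simp add: nth_append)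
    next
      case False
      then have "i = length p - 1" using i by simp
      moreover have "p ! (length p - 1) = a" using ne la by (simp add: last_conv_nth)
      ultimately show ?thesis using ne assms(2) by (simp add: nth_append)
    qed
  qed
  then show ?thesis using ne sv hd assms(3) by (auto simp: path_from_to_def is_path_def)
qed

lemma is_path_mono:
  assumes "is_path G p" "verts G \<subseteq> verts H" "arcs G \<subseteq> arcs H"
  shows "is_path H p"
  using assms by (auto simp: is_path_def)

lemma tpath_prop:
  assumes "fin_arb T" "v \<in> verts T"
  shows "path_from_to T (tpath T v) (root T) v"
proof -
  have "\<exists>!p. path_from_to T p (root T) v" using assms by (auto simp: fin_arb_def arborescence_def)
  then show ?thesis unfolding tpath_def by (rule theI')
qed

lemma tpath_unique:
  assumes "fin_arb T" "v \<in> verts T" "path_from_to T p (root T) v"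
  shows "p = tpath T v"
proof -
  have "\<exists>!p. path_from_to T p (root T) v" using assms by (auto simp: fin_arb_def arborescence_def)
  then show ?thesis unfolding tpath_def using assms(3) by (simp add: the1_equality)
qed

lemma arcs_verts: "fin_arb T \<Longrightarrow> (a, b) \<in> arcs T \<Longrightarrow> a \<in> verts T \<and> b \<in> verts T"
  by (auto simp: fin_arb_def fin_eo_graph_def)

lemma tpath_arc:
  assumes "fin_arb T" "(a, b) \<in> arcs T"
  shows "tpath T b = tpath T a @ [b]"
proof -
  have ab: "a \<in> verts T" "b \<in> verts T" using arcs_verts[OF assms] by auto
  have "path_from_to T (tpath T a @ [b]) (root T) b"
    by (rule path_snoc[OF tpath_prop[OF assms(1) ab(1)] assms(2) ab(2)])
  then show ?thesis using tpath_unique[OF assms(1) ab(2)] by simp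
qed

lemma tpath_len_arc:
  assumes "fin_arb T" "(a, b) \<in> arcs T"
  shows "length (tpath T b) = Suc (length (tpath T a))"
  using tpath_arc[OF assms] by simp

lemma tpath_len_trancl:
  assumes "fin_arb T" "(a, b) \<in> (arcs T)\<^sup>+"
  shows "length (tpath T a) < length (tpath T b)"
  using assms(2)
proof (induction rule: trancl_induct)
  case (base y) then show ?case using tpath_len_arc[OF assms(1)] by simp
next
  case (step y z) then show ?case using tpath_len_arc[OF assms(1) step(2)] by simp
qed

lemma trancl_verts:
  assumes "fin_arb T" "(a, b) \<in> (arcs T)\<^sup>+"
  shows "a \<in> verts T \<and> b \<in> verts T"
proof -
  have "arcs T \<subseteq> verts T \<times> verts T" using assms(1) by (auto simp: fin_arb_def fin_eo_graph_def)
  then have "(arcs T)\<^sup>+ \<subseteq> verts T \<times> verts T" by (rule trancl_subset_Sigma)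
  then show ?thesis using assms(2) by auto
qed

lemma tpath_ne: "fin_arb T \<Longrightarrow> v \<in> verts T \<Longrightarrow> tpath T v \<noteq> []"
  using tpath_prop[of T v] by (auto simp: path_from_to_def is_path_def)

lemma tpath_hd: "fin_arb T \<Longrightarrow> v \<in> verts T \<Longrightarrow> hd (tpath T v) = root T"
  using tpath_prop[of T v] by (auto simp: path_from_to_def)

lemma tpath_last: "fin_arb T \<Longrightarrow> v \<in> verts T \<Longrightarrow> last (tpath T v) = v"
  using tpath_prop[of T v] by (auto simp: path_from_to_def)

lemma tpath_is_path: "fin_arb T \<Longrightarrow> v \<in> verts T \<Longrightarrow> is_path T (tpath T v)"
  using tpath_prop[of T v] by (auto simp: path_from_to_def)

section \<open>Lexicographic order on equal-length lists\<close>

lemma lex_less_eq_len: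
  assumes "length p = length q"
  shows "lex_less G p q \<longleftrightarrow>
    (\<exists>i. 0 < i \<and> i < length p \<and> take i p = take i q \<and> eord G (p ! (i - 1)) (p ! i) (q ! i))"
proof
  assume "lex_less G p q"
  moreover have "\<not> strict_prefix p q" using assms prefix_length_less by fastforce
  ultimately obtain z v1 v2 r1 r2 where z: "z \<noteq> []" "p = z @ v1 # r1" "q = z @ v2 # r2"
    "eord G (last z) v1 v2" unfolding lex_less_def by blast
  have "last z = z ! (length z - 1)" using z(1) by (simp add: last_conv_nth)
  moreover have "p ! (length z - 1) = z ! (length z - 1)" using z(1,2) by (simp add: nth_append)
  ultimately show "\<exists>i. 0 < i \<and> i < length p \<and> take i p = take i q \<and> eord G (p ! (i - 1)) (p ! i) (q ! i)"
    using z by (intro exI[of _ "length z"]) auto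
next
  assume "\<exists>i. 0 < i \<and> i < length p \<and> take i p = take i q \<and> eord G (p ! (i - 1)) (p ! i) (q ! i)"
  then obtain i where i: "0 < i" "i < length p" "take i p = take i q" "eord G (p ! (i - 1)) (p ! i) (q ! i)"
    by blast
  have p: "p = take i p @ p ! i # drop (Suc i) p" using i(2) by (simp add: id_take_nth_drop)
  have "i < length q" using i(2) assms by simp
  then have q: "q = take i p @ q ! i # drop (Suc i) q" using i(3) by (metis id_take_nth_drop)
  have ne: "take i p \<noteq> []" using i(1,2) by (cases p) auto
  have "last (take i p) = p ! (i - 1)" using ne i(1,2) by (simp add: last_conv_nth)
  then show "lex_less G p q" unfolding lex_less_def using p q ne i(4)
    by (intro disjI2 exI[of _ "take i p"] exI[of _ "p ! i"] exI[of _ "q ! i"]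
          exI[of _ "drop (Suc i) p"] exI[of _ "drop (Suc i) q"]) simp
qed

lemma eord_arcs: "fin_eo_graph G \<Longrightarrow> eord G u v1 v2 \<Longrightarrow> (u, v1) \<in> arcs G \<and> (u, v2) \<in> arcs G"
  by (auto simp: fin_eo_graph_def)

lemma eord_trans:
  assumes G: "fin_eo_graph G" and "eord G u a b" "eord G u b c"
  shows "eord G u a c"
proof -
  have "(u, a) \<in> arcs G" "(u, b) \<in> arcs G" "(u, c) \<in> arcs G" using eord_arcs[OF G] assms by auto
  moreover then have "u \<in> verts G" using G by (auto simp: fin_eo_graph_def)
  ultimately show ?thesis using G assms(2,3) unfolding fin_eo_graph_def nbhd_def by blast
qed

lemma lex_trans:
  assumes G: "fin_eo_graph G" and l: "length p = length q" "length q = length r"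
    and pq: "lex_less G p q" and qr: "lex_less G q r"
  shows "lex_less G p r"
proof -
  obtain i where i: "0 < i" "i < length p" "take i p = take i q" "eord G (p ! (i - 1)) (p ! i) (q ! i)"
    using pq lex_less_eq_len[OF l(1)] by blast
  obtain j where j: "0 < j" "j < length q" "take j q = take j r" "eord G (q ! (j - 1)) (q ! j) (r ! j)"
    using qr lex_less_eq_len[OF l(2)] by blast
  have lpr: "length p = length r" using l by simp
  show ?thesis unfolding lex_less_eq_len[OF lpr]
  proof (cases i j rule: linorder_cases)
    case less
    have "take i (take j q) = take i (take j r)" using j(3) by simp
    then have "take i q = take i r" using less by (simp add: min_def)
    moreover have "take j q ! i = take j r ! i" using j(3) by simp
    then have "q ! i = r ! i" using less by simp
    ultimately show "\<exists>i. 0 < i \<and> i < length p \<and> take i p = take i r \<and> eord G (p ! (i - 1)) (p ! i) (r ! i)"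
      using i by (intro exI[of _ i]) simp
  next
    case greater
    have "take j (take i p) = take j (take i q)" using i(3) by simp
    then have tpq: "take j p = take j q" using greater by (simp add: min_def)
    moreover have "take i p ! j = take i q ! j" using i(3) by simp
    then have "p ! j = q ! j" using greater by simp
    moreover have "take i p ! (j - 1) = take i q ! (j - 1)" using i(3) by simp
    then have "p ! (j - 1) = q ! (j - 1)" using greater j(1) by simp
    ultimately show "\<exists>i. 0 < i \<and> i < length p \<and> take i p = take i r \<and> eord G (p ! (i - 1)) (p ! i) (r ! i)"
      using j l by (intro exI[of _ j]) simp
  next
    case equal
    have "take i p ! (i - 1) = take i q ! (i - 1)" using i(3) by simp
    then have "p ! (i - 1) = q ! (i - 1)" using i(1) by simp
    then have "eord G (p ! (i - 1)) (p ! i) (r ! i)" using eord_trans[OF G i(4)] j(4) equal by simp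
    then show "\<exists>i. 0 < i \<and> i < length p \<and> take i p = take i r \<and> eord G (p ! (i - 1)) (p ! i) (r ! i)"
      using i j equal by (intro exI[of _ i]) simp
  qed
qed

lemma lex_irrefl:
  assumes G: "fin_eo_graph G" and p: "is_path G p"
  shows "\<not> lex_less G p p"
proof
  assume "lex_less G p p"
  then obtain i where i: "0 < i" "i < length p" "eord G (p ! (i - 1)) (p ! i) (p ! i)"
    using lex_less_eq_len[of p p G] by blast
  have "Suc (i - 1) < length p" using i(1,2) by simp
  then have "(p ! (i - 1), p ! Suc (i - 1)) \<in> arcs G" using p unfolding is_path_def by blast
  then have "(p ! (i - 1), p ! i) \<in> arcs G" using i(1) by simp
  moreover then have "p ! (i - 1) \<in> verts G" using G by (auto simp: fin_eo_graph_def)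
  ultimately show False using G i(3) unfolding fin_eo_graph_def nbhd_def by blast
qed

lemma lex_total:
  assumes G: "fin_eo_graph G" and p: "is_path G p" and q: "is_path G q"
    and h: "hd p = hd q" and l: "length p = length q" and ne: "p \<noteq> q"
  shows "lex_less G p q \<or> lex_less G q p"
proof -
  have ex: "\<exists>k. k < length p \<and> p ! k \<noteq> q ! k" using ne l nth_equalityI by blast
  define i where "i = (LEAST k. k < length p \<and> p ! k \<noteq> q ! k)"
  have i: "i < length p" "p ! i \<noteq> q ! i" using LeastI_ex[OF ex] unfolding i_def by auto
  have below: "p ! k = q ! k" if "k < i" for k
    using not_less_Least[of k "\<lambda>k. k < length p \<and> p ! k \<noteq> q ! k"] i(1) that
    unfolding i_def by auto
  have pne: "p \<noteq> []" using p by (simp add: is_path_def)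
  have qne: "q \<noteq> []" using q by (simp add: is_path_def)
  have "p ! 0 = q ! 0" using h pne qne by (simp add: hd_conv_nth)
  then have "i \<noteq> 0" using i(2) by (cases i) auto
  then have i0: "0 < i" by simp
  have tk: "take i p = take i q" using below l i(1) by (intro nth_equalityI) auto
  have si: "Suc (i - 1) = i" using i0 by simp
  have "Suc (i - 1) < length p" using i0 i(1) by simp
  then have a1: "(p ! (i - 1), p ! i) \<in> arcs G" using p unfolding is_path_def by (metis si)
  have "Suc (i - 1) < length q" using i0 i(1) l by simp
  then have a2: "(q ! (i - 1), q ! i) \<in> arcs G" using q unfolding is_path_def by (metis si)
  have e: "q ! (i - 1) = p ! (i - 1)" using below i0 by simp
  have "p ! (i - 1) \<in> verts G" using G a1 by (auto simp: fin_eo_graph_def)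
  then have "eord G (p ! (i - 1)) (p ! i) (q ! i) \<or> eord G (p ! (i - 1)) (q ! i) (p ! i)"
  proof -
    have tot: "\<forall>v1\<in>nbhd G (p ! (i - 1)). \<forall>v2\<in>nbhd G (p ! (i - 1)). v1 \<noteq> v2 \<longrightarrow>
        eord G (p ! (i - 1)) v1 v2 \<or> eord G (p ! (i - 1)) v2 v1"
      using G \<open>p ! (i - 1) \<in> verts G\<close> unfolding fin_eo_graph_def by blast
    have "p ! i \<in> nbhd G (p ! (i - 1))" "q ! i \<in> nbhd G (p ! (i - 1))"
      using a1 a2 e by (auto simp: nbhd_def)
    then show ?thesis using tot i(2) by blast
  qed
  then show ?thesis
  proof
    assume "eord G (p ! (i - 1)) (p ! i) (q ! i)"
    then show ?thesis using i0 i(1) tk unfolding lex_less_eq_len[OF l] by blast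
  next
    assume "eord G (p ! (i - 1)) (q ! i) (p ! i)"
    then show ?thesis using i0 i(1) tk e l unfolding lex_less_eq_len[OF l[symmetric]]
      by (intro disjI2 exI[of _ i]) simp
  qed
qed


section \<open>Shortlex on tree paths\<close>

lemma fin_arb_eo: "fin_arb T \<Longrightarrow> fin_eo_graph T"
  by (simp add: fin_arb_def)

lemma sl_irrefl:
  assumes "fin_arb T" "v \<in> verts T"
  shows "\<not> shortlex_less T (tpath T v) (tpath T v)"
  using lex_irrefl[OF fin_arb_eo[OF assms(1)] tpath_is_path[OF assms]]
  by (simp add: shortlex_less_def)

lemma sl_trans:
  assumes G: "fin_eo_graph G" and ne: "p \<noteq> []" "q \<noteq> []" "r \<noteq> []"
    and pq: "shortlex_less G p q" and qr: "shortlex_less G q r"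
  shows "shortlex_less G p r"
proof -
  have 1: "path_len p < path_len q \<or> (path_len p = path_len q \<and> lex_less G p q)"
    using pq unfolding shortlex_less_def .
  have 2: "path_len q < path_len r \<or> (path_len q = path_len r \<and> lex_less G q r)"
    using qr unfolding shortlex_less_def .
  show ?thesis
  proof (cases "path_len p = path_len q \<and> path_len q = path_len r")
    case True
    have l: "length p = length q" "length q = length r"
  proof -
    have "length p > 0" "length q > 0" "length r > 0" using ne by simp_all
    then show "length p = length q" "length q = length r" using True unfolding path_len_def by linarith+
  qed
    have "lex_less G p q" "lex_less G q r" using 1 2 True by simp_all
    then have "lex_less G p r" using lex_trans[OF G l] by simp
    then show ?thesis using True unfolding shortlex_less_def by simp
  next
    case False
    have "path_len p \<le> path_len q" "path_len q \<le> path_len r" using 1 2 by auto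
    then have "path_len p < path_len r" using False by linarith
    then show ?thesis unfolding shortlex_less_def by simp
  qed
qed

lemma sl_total:
  assumes T: "fin_arb T" and v: "v1 \<in> verts T" "v2 \<in> verts T" "v1 \<noteq> v2"
  shows "shortlex_less T (tpath T v1) (tpath T v2) \<or> shortlex_less T (tpath T v2) (tpath T v1)"
proof (cases "length (tpath T v1) = length (tpath T v2)")
  case True
  have "tpath T v1 \<noteq> tpath T v2" using tpath_last[OF T v(1)] tpath_last[OF T v(2)] v(3) by metis
  then have "lex_less T (tpath T v1) (tpath T v2) \<or> lex_less T (tpath T v2) (tpath T v1)"
    using lex_total[OF fin_arb_eo[OF T] tpath_is_path[OF T v(1)] tpath_is_path[OF T v(2)]] True
      tpath_hd[OF T v(1)] tpath_hd[OF T v(2)] by simp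
  then show ?thesis using True by (auto simp: shortlex_less_def path_len_def)
next
  case False
  have "tpath T v1 \<noteq> []" "tpath T v2 \<noteq> []" using tpath_ne[OF T v(1)] tpath_ne[OF T v(2)] by auto
  then show ?thesis using False by (cases "tpath T v1"; cases "tpath T v2") (auto simp: shortlex_less_def path_len_def)
qed

section \<open>Gamma on objects\<close>

lemma Gamma_simps[simp]:
  "verts (Gamma T) = verts T" "arcs (Gamma T) = (arcs T)\<^sup>+" "root (Gamma T) = root T"
  "eord (Gamma T) u v1 v2 = ((u, v1) \<in> (arcs T)\<^sup>+ \<and> (u, v2) \<in> (arcs T)\<^sup>+ \<and>
                        shortlex_less T (tpath T v1) (tpath T v2))"
  by (simp_all add: Gamma_def)

lemma Gamma_fin_eo:
  assumes T: "fin_arb T"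
  shows "fin_eo_graph (Gamma T)"
proof -
  have fv: "finite (verts T)" "root T \<in> verts T" using T by (auto simp: fin_arb_def fin_eo_graph_def)
  have sub: "(arcs T)\<^sup>+ \<subseteq> verts T \<times> verts T" using trancl_verts[OF T] by auto
  have irr: "\<forall>u\<in>verts (Gamma T). \<forall>v\<in>nbhd (Gamma T) u. \<not> eord (Gamma T) u v v"
  proof (intro ballI)
    fix u v assume "v \<in> nbhd (Gamma T) u"
    then have "(u, v) \<in> (arcs T)\<^sup>+" by (simp add: nbhd_def)
    then have "v \<in> verts T" using trancl_verts[OF T] by blast
    then have "\<not> shortlex_less T (tpath T v) (tpath T v)" by (rule sl_irrefl[OF T])
    then show "\<not> eord (Gamma T) u v v" by simp
  qed
  have tr: "\<forall>u\<in>verts (Gamma T). (\<forall>v1\<in>nbhd (Gamma T) u. \<forall>v2\<in>nbhd (Gamma T) u. \<forall>v3\<in>nbhd (Gamma T) u.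
            eord (Gamma T) u v1 v2 \<longrightarrow> eord (Gamma T) u v2 v3 \<longrightarrow> eord (Gamma T) u v1 v3)"
  proof (intro ballI impI)
    fix u v1 v2 v3
    assume a: "v1 \<in> nbhd (Gamma T) u" "v2 \<in> nbhd (Gamma T) u" "v3 \<in> nbhd (Gamma T) u"
      "eord (Gamma T) u v1 v2" "eord (Gamma T) u v2 v3"
    have vv: "v1 \<in> verts T" "v2 \<in> verts T" "v3 \<in> verts T" using a(1-3) trancl_verts[OF T]
      by (auto simp: nbhd_def)
    have "shortlex_less T (tpath T v1) (tpath T v3)"
      using sl_trans[OF fin_arb_eo[OF T] tpath_ne[OF T vv(1)] tpath_ne[OF T vv(2)] tpath_ne[OF T vv(3)]]
        a(4,5) by simp
    then show "eord (Gamma T) u v1 v3" using a by (simp add: nbhd_def)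
  qed
  have tot: "\<forall>u\<in>verts (Gamma T). (\<forall>v1\<in>nbhd (Gamma T) u. \<forall>v2\<in>nbhd (Gamma T) u. v1 \<noteq> v2 \<longrightarrow>
       eord (Gamma T) u v1 v2 \<or> eord (Gamma T) u v2 v1)"
  proof (intro ballI impI)
    fix u v1 v2
    assume a: "v1 \<in> nbhd (Gamma T) u" "v2 \<in> nbhd (Gamma T) u" "v1 \<noteq> v2"
    have vv: "v1 \<in> verts T" "v2 \<in> verts T" using a(1-2) trancl_verts[OF T]
      by (auto simp: nbhd_def)
    show "eord (Gamma T) u v1 v2 \<or> eord (Gamma T) u v2 v1"
      using sl_total[OF T vv a(3)] a(1,2) by (simp add: nbhd_def)
  qed
  have last: "\<forall>u\<in>verts (Gamma T).
        (\<forall>v\<in>nbhd (Gamma T) u. \<not> eord (Gamma T) u v v) \<and>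
        (\<forall>v1\<in>nbhd (Gamma T) u. \<forall>v2\<in>nbhd (Gamma T) u. \<forall>v3\<in>nbhd (Gamma T) u.
            eord (Gamma T) u v1 v2 \<longrightarrow> eord (Gamma T) u v2 v3 \<longrightarrow> eord (Gamma T) u v1 v3) \<and>
        (\<forall>v1\<in>nbhd (Gamma T) u. \<forall>v2\<in>nbhd (Gamma T) u. v1 \<noteq> v2 \<longrightarrow> eord (Gamma T) u v1 v2 \<or> eord (Gamma T) u v2 v1)"
  proof (rule ballI)
    fix u assume u: "u \<in> verts (Gamma T)"
    show "(\<forall>v\<in>nbhd (Gamma T) u. \<not> eord (Gamma T) u v v) \<and>
        (\<forall>v1\<in>nbhd (Gamma T) u. \<forall>v2\<in>nbhd (Gamma T) u. \<forall>v3\<in>nbhd (Gamma T) u.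
            eord (Gamma T) u v1 v2 \<longrightarrow> eord (Gamma T) u v2 v3 \<longrightarrow> eord (Gamma T) u v1 v3) \<and>
        (\<forall>v1\<in>nbhd (Gamma T) u. \<forall>v2\<in>nbhd (Gamma T) u. v1 \<noteq> v2 \<longrightarrow> eord (Gamma T) u v1 v2 \<or> eord (Gamma T) u v2 v1)"
      using bspec[OF irr u] bspec[OF tr u] bspec[OF tot u] by (intro conjI)
  qed
  show ?thesis unfolding fin_eo_graph_def
  proof (intro conjI)
    show "finite (verts (Gamma T))" using fv by simp
    show "root (Gamma T) \<in> verts (Gamma T)" using fv by simp
    show "arcs (Gamma T) \<subseteq> verts (Gamma T) \<times> verts (Gamma T)" using sub by simp
    show "\<forall>u v1 v2. eord (Gamma T) u v1 v2 \<longrightarrow> (u, v1) \<in> arcs (Gamma T) \<and> (u, v2) \<in> arcs (Gamma T)"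
      by simp
  qed (rule last)
qed

lemma Gamma_connected:
  assumes T: "fin_arb T"
  shows "connected_pg (Gamma T)"
  unfolding connected_pg_def
proof
  fix u assume u: "u \<in> verts (Gamma T)"
  have "path_from_to T (tpath T u) (root T) u" using tpath_prop[OF T] u by simp
  then have "path_from_to (Gamma T) (tpath T u) (root T) u"
  proof -
    have "arcs T \<subseteq> (arcs T)\<^sup>+" by auto
    then show ?thesis using \<open>path_from_to T (tpath T u) (root T) u\<close>
      unfolding path_from_to_def using is_path_mono[of T "tpath T u" "Gamma T"] by simp
  qed
  then show "\<exists>p. path_from_to (Gamma T) p (root (Gamma T)) u" by auto
qed

lemma Gamma_obj:
  assumes T: "fin_arb T"
  shows "tarb_obj (Gamma T)"
proof -
  have c: "connected_pg T" unfolding connected_pg_def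
  proof
    fix u assume "u \<in> verts T"
    then have "path_from_to T (tpath T u) (root T) u" by (rule tpath_prop[OF T])
    then show "\<exists>p. path_from_to T p (root T) u" by (rule exI)
  qed
  have a: "arborescence T" using T by (simp add: fin_arb_def)
  have e: "\<forall>u v1 v2. (u, v1) \<in> arcs (Gamma T) \<longrightarrow> (u, v2) \<in> arcs (Gamma T) \<longrightarrow>
           (eord (Gamma T) u v1 v2 \<longleftrightarrow> shortlex_less T (tpath T v1) (tpath T v2))"
    by simp
  have x: "arcs (Gamma T) = (arcs T)\<^sup>+" "verts T = verts (Gamma T)" "root T = root (Gamma T)"
    by simp_all
  have "\<exists>T' :: 'a eograph. fin_eo_graph T' \<and> connected_pg T' \<and> arborescence T' \<and>
        verts T' = verts (Gamma T) \<and> root T' = root (Gamma T) \<and> arcs (Gamma T) = (arcs T')\<^sup>+ \<and>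
        (\<forall>u v1 v2. (u, v1) \<in> arcs (Gamma T) \<longrightarrow> (u, v2) \<in> arcs (Gamma T) \<longrightarrow>
           (eord (Gamma T) u v1 v2 \<longleftrightarrow> shortlex_less T' (tpath T' v1) (tpath T' v2)))"
    by (rule exI[of _ T], intro conjI, rule fin_arb_eo[OF T], rule c, rule a, rule x(2), rule x(3), rule x(1), rule e)
  then show ?thesis unfolding tarb_obj_def
    using Gamma_fin_eo[OF T] Gamma_connected[OF T] by (intro conjI)
qed


section \<open>Gamma on morphisms\<close>

lemma eo_hom_root:
  assumes "eo_hom T T' h" "fin_arb T"
  shows "h (root T) = root T'"
proof -
  have "root T \<in> verts T" using assms(2) by (simp add: fin_arb_def fin_eo_graph_def)
  then show ?thesis using assms(1) unfolding eo_hom_def by blast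
qed

lemma hom_is_path:
  assumes h: "eo_hom T T' h" and p: "is_path T p"
  shows "is_path T' (map h p)"
proof -
  have a: "\<And>u v. (u, v) \<in> arcs T \<Longrightarrow> (h u, h v) \<in> arcs T'" using h unfolding eo_hom_def by blast
  have vs: "h ` verts T \<subseteq> verts T'" using h unfolding eo_hom_def by blast
  have "p \<noteq> []" "set p \<subseteq> verts T" "\<And>i. Suc i < length p \<Longrightarrow> (p ! i, p ! Suc i) \<in> arcs T"
    using p unfolding is_path_def by blast+
  then show ?thesis unfolding is_path_def using a vs by fastforce
qed

lemma hom_tpath:
  assumes m: "finarb_mor T T' h" and v: "v \<in> verts T"
  shows "tpath T' (h v) = map h (tpath T v)"
proof -
  have T: "fin_arb T" and T': "fin_arb T'" and h: "eo_hom T T' h" using m by (simp_all add: finarb_mor_def)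
  have hv: "h v \<in> verts T'" using h v unfolding eo_hom_def by blast
  have "is_path T' (map h (tpath T v))" by (rule hom_is_path[OF h tpath_is_path[OF T v]])
  moreover have "hd (map h (tpath T v)) = root T'"
    using tpath_hd[OF T v] tpath_ne[OF T v] eo_hom_root[OF h T] by (simp add: hd_map)
  moreover have "last (map h (tpath T v)) = h v"
    using tpath_last[OF T v] tpath_ne[OF T v] by (simp add: last_map)
  ultimately have "path_from_to T' (map h (tpath T v)) (root T') (h v)" by (simp add: path_from_to_def)
  then show ?thesis using tpath_unique[OF T' hv] by simp
qed

lemma hom_trancl:
  assumes h: "eo_hom T T' h" and ab: "(a, b) \<in> (arcs T)\<^sup>+"
  shows "(h a, h b) \<in> (arcs T')\<^sup>+"
  using ab
proof (induction rule: trancl_induct)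
  case (base y) then show ?case using h unfolding eo_hom_def by blast
next
  case (step y z)
  have "(h y, h z) \<in> arcs T'" using step(2) h unfolding eo_hom_def by blast
  with step(3) show ?case by (rule trancl_into_trancl)
qed

lemma hom_lex:
  assumes h: "eo_hom T T' h" and G: "fin_eo_graph T" and l: "lex_less T p q"
  shows "lex_less T' (map h p) (map h q)"
  using l unfolding lex_less_def
proof (elim disjE exE conjE)
  assume sp: "strict_prefix p q"
  then have "prefix (map h p) (map h q)" by (simp add: map_mono_prefix)
  moreover have "length (map h p) < length (map h q)" using sp prefix_length_less by fastforce
  moreover have "map h p \<noteq> map h q" using calculation(2) by (metis less_irrefl)
  ultimately have "strict_prefix (map h p) (map h q)" by (simp add: strict_prefix_def)
  then show "strict_prefix (map h p) (map h q) \<or>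
    (\<exists>z v1 v2 r1 r2. z \<noteq> [] \<and> map h p = z @ v1 # r1 \<and> map h q = z @ v2 # r2 \<and> eord T' (last z) v1 v2)"
    by blast
next
  fix z v1 v2 r1 r2
  assume z: "z \<noteq> []" "p = z @ v1 # r1" "q = z @ v2 # r2" "eord T (last z) v1 v2"
  have "(last z, v1) \<in> arcs T" "(last z, v2) \<in> arcs T" using eord_arcs[OF G z(4)] by auto
  then have "eord T' (h (last z)) (h v1) (h v2)" using h z(4) unfolding eo_hom_def by blast
  then have "eord T' (last (map h z)) (h v1) (h v2)" using z(1) by (simp add: last_map)
  moreover have "map h z \<noteq> []" using z(1) by simp
  ultimately show "strict_prefix (map h p) (map h q) \<or>
    (\<exists>z v1 v2 r1 r2. z \<noteq> [] \<and> map h p = z @ v1 # r1 \<and> map h q = z @ v2 # r2 \<and> eord T' (last z) v1 v2)"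
    using z(2,3) by (intro disjI2 exI[of _ "map h z"] exI[of _ "h v1"] exI[of _ "h v2"]
        exI[of _ "map h r1"] exI[of _ "map h r2"]) simp
qed

lemma depth_bound:
  assumes T: "fin_arb T" and p: "is_path (Gamma T) p"
  shows "length (tpath T (hd p)) + path_len p \<le> length (tpath T (last p))"
proof -
  have ne: "p \<noteq> []" using p by (simp add: is_path_def)
  have ar: "\<And>i. Suc i < length p \<Longrightarrow> (p ! i, p ! Suc i) \<in> (arcs T)\<^sup>+"
    using p unfolding is_path_def by simp
  have "i < length p \<Longrightarrow> length (tpath T (p ! 0)) + i \<le> length (tpath T (p ! i))" for i
  proof (induction i)
    case 0 then show ?case by simp
  next
    case (Suc i)
    then have "length (tpath T (p ! i)) < length (tpath T (p ! Suc i))"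
      using tpath_len_trancl[OF T ar[OF Suc.prems]] by simp
    then show ?case using Suc by simp
  qed
  from this[of "length p - 1"] show ?thesis using ne
    by (simp add: hd_conv_nth last_conv_nth path_len_def)
qed

lemma path_rtrancl:
  assumes p: "is_path G p"
  shows "(hd p, last p) \<in> (arcs G)\<^sup>*"
proof -
  have ne: "p \<noteq> []" using p by (simp add: is_path_def)
  have ar: "\<And>i. Suc i < length p \<Longrightarrow> (p ! i, p ! Suc i) \<in> arcs G"
    using p unfolding is_path_def by simp
  have "i < length p \<Longrightarrow> (p ! 0, p ! i) \<in> (arcs G)\<^sup>*" for i
  proof (induction i)
    case 0 then show ?case by simp
  next
    case (Suc i)
    then show ?case using ar[OF Suc.prems] by (simp add: rtrancl_into_rtrancl)
  qed
  from this[of "length p - 1"] show ?thesis using ne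
    by (simp add: hd_conv_nth last_conv_nth)
qed

lemma walk_exists:
  assumes T: "fin_arb T" and u: "u \<in> verts T" and uv: "(u, v) \<in> (arcs T)\<^sup>*"
  shows "\<exists>w. path_from_to T w u v \<and> length (tpath T u) + path_len w = length (tpath T v)"
  using uv
proof (induction rule: rtrancl_induct)
  case base
  show ?case using path_single[OF u] by (intro exI[of _ "[u]"]) (simp add: path_len_def)
next
  case (step y z)
  obtain w where w: "path_from_to T w u y" "length (tpath T u) + path_len w = length (tpath T y)"
    using step(3) by blast
  have zv: "z \<in> verts T" using arcs_verts[OF T step(2)] by simp
  have "path_from_to T (w @ [z]) u z" by (rule path_snoc[OF w(1) step(2) zv])
  moreover have "w \<noteq> []" using w(1) by (simp add: path_from_to_def is_path_def)
  then have "path_len (w @ [z]) = Suc (path_len w)" by (cases w) (simp_all add: path_len_def)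
  ultimately show ?case using w(2) tpath_len_arc[OF T step(2)] by (intro exI[of _ "w @ [z]"]) simp
qed

lemma Gamma_mor_eq: "Gamma_mor h = h"
  by (simp add: Gamma_mor_def)

lemma Gamma_mor_ok:
  assumes m: "finarb_mor T T' h"
  shows "tarb_mor (Gamma T) (Gamma T') (Gamma_mor h)"
proof -
  have T: "fin_arb T" and T': "fin_arb T'" and h: "eo_hom T T' h" using m by (simp_all add: finarb_mor_def)
  have hom: "eo_hom (Gamma T) (Gamma T') h"
    unfolding eo_hom_def
  proof (intro conjI allI impI)
    show "h ` verts (Gamma T) \<subseteq> verts (Gamma T')" using h by (simp add: eo_hom_def)
  next
    fix u v assume "(u, v) \<in> arcs (Gamma T)"
    then show "(h u, h v) \<in> arcs (Gamma T')" using hom_trancl[OF h] by simp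
  next
    show "\<forall>v\<in>verts (Gamma T). (h v = root (Gamma T')) = (v = root (Gamma T))"
      using h by (simp add: eo_hom_def)
  next
    fix u v1 v2
    assume a: "(u, v1) \<in> arcs (Gamma T)" "(u, v2) \<in> arcs (Gamma T)" "eord (Gamma T) u v1 v2"
    have v: "v1 \<in> verts T" "v2 \<in> verts T" using a(1,2) trancl_verts[OF T] by auto
    have sl: "shortlex_less T (tpath T v1) (tpath T v2)" using a(3) by simp
    have "shortlex_less T' (map h (tpath T v1)) (map h (tpath T v2))"
      using sl hom_lex[OF h fin_arb_eo[OF T]] unfolding shortlex_less_def path_len_def
      by (metis length_map)
    then have "shortlex_less T' (tpath T' (h v1)) (tpath T' (h v2))"
      using hom_tpath[OF m v(1)] hom_tpath[OF m v(2)] by simp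
    moreover have "(h u, h v1) \<in> (arcs T')\<^sup>+" "(h u, h v2) \<in> (arcs T')\<^sup>+"
      using a(1,2) hom_trancl[OF h] by simp_all
    ultimately show "eord (Gamma T') (h u) (h v1) (h v2)" by simp
  qed
  have lp: "longest_path (Gamma T') (map h p) (h u) (h v)" if lp: "longest_path (Gamma T) p u v" for p u v
  proof -
    have pf: "path_from_to (Gamma T) p u v"
      and mx: "\<And>q. path_from_to (Gamma T) q u v \<Longrightarrow> path_len q \<le> path_len p"
      using lp unfolding longest_path_def by blast+
    have pp: "is_path (Gamma T) p" and hp: "hd p = u" and lp': "last p = v" and ne: "p \<noteq> []"
      using pf by (simp_all add: path_from_to_def is_path_def)
    have uv: "u \<in> verts T" "v \<in> verts T" using pp hp lp' ne unfolding is_path_def by auto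
    have b1: "length (tpath T u) + path_len p \<le> length (tpath T v)"
      using depth_bound[OF T pp] hp lp' by simp
    have "(u, v) \<in> ((arcs T)\<^sup>+)\<^sup>*" using path_rtrancl[OF pp] hp lp' by simp
    then have "(u, v) \<in> (arcs T)\<^sup>*" by simp
    then obtain w where w: "path_from_to T w u v" "length (tpath T u) + path_len w = length (tpath T v)"
      using walk_exists[OF T uv(1)] by blast
    have "arcs T \<subseteq> (arcs T)\<^sup>+" by auto
    then have "path_from_to (Gamma T) w u v" using w(1) is_path_mono[of T w "Gamma T"]
      by (simp add: path_from_to_def)
    then have "path_len w \<le> path_len p" by (rule mx)
    then have eq: "length (tpath T u) + path_len p = length (tpath T v)" using b1 w(2) by simp
    have hpath: "is_path (Gamma T') (map h p)" by (rule hom_is_path[OF hom pp])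
    have hpf: "path_from_to (Gamma T') (map h p) (h u) (h v)"
      using hpath hp lp' ne by (simp add: path_from_to_def hd_map last_map)
    have du: "length (tpath T' (h u)) = length (tpath T u)" using hom_tpath[OF m uv(1)] by simp
    have dv: "length (tpath T' (h v)) = length (tpath T v)" using hom_tpath[OF m uv(2)] by simp
    have "path_len q \<le> path_len (map h p)" if q: "path_from_to (Gamma T') q (h u) (h v)" for q
    proof -
      have "is_path (Gamma T') q" "hd q = h u" "last q = h v" using q by (simp_all add: path_from_to_def)
      then have "length (tpath T' (h u)) + path_len q \<le> length (tpath T' (h v))"
        using depth_bound[OF T', of q] by simp
      then show ?thesis using eq du dv by (simp add: path_len_def)
    qed
    then show ?thesis using hpf unfolding longest_path_def by blast
  qed
  show ?thesis unfolding tarb_mor_def Gamma_mor_eq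
    using Gamma_obj[OF T] Gamma_obj[OF T'] hom lp by blast
qed

theorem lemma10p6:
  fixes T :: "'a eograph" and T' :: "'b eograph" and T'' :: "'c eograph"
    and h :: "'a \<Rightarrow> 'b" and g :: "'b \<Rightarrow> 'c"
  assumes "fin_arb T" and "fin_arb T'" and "fin_arb T''"
    and "finarb_mor T T' h" and "finarb_mor T' T'' g"
  shows "tarb_obj (Gamma T)
    \<and> tarb_mor (Gamma T) (Gamma T') (Gamma_mor h)
    \<and> tarb_mor (Gamma T) (Gamma T) (Gamma_mor id)
    \<and> Gamma_mor (g \<circ> h) = Gamma_mor g \<circ> Gamma_mor h"
proof (intro conjI)
  show "tarb_obj (Gamma T)" by (rule Gamma_obj[OF assms(1)])
  show "tarb_mor (Gamma T) (Gamma T') (Gamma_mor h)" by (rule Gamma_mor_ok[OF assms(4)])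
  have "eo_hom T T id" unfolding eo_hom_def by simp
  then have "finarb_mor T T id" using assms(1) by (simp add: finarb_mor_def)
  then show "tarb_mor (Gamma T) (Gamma T) (Gamma_mor id)" by (rule Gamma_mor_ok)
  show "Gamma_mor (g \<circ> h) = Gamma_mor g \<circ> Gamma_mor h" by (simp add: Gamma_mor_eq)
qed

end
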